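(* Let $(f,\bar f)\colon(G,P_G)\to(H,P_H)$ be a regular epimorphism in $\mathsf{PreOrdGrp}$. Then $\bar f\colon P_G\to P_H$ is a special homogeneous surjection in the category $\mathsf{Mon}$ of monoids if and only if for all $x,y\in P_G$ with $f(x)=f(y)$ one has $y-x\in P_G$ and $-x+y\in P_G$.
   Context: A preordered group is a pair $(G,P_G)$ with $G$ an additively written group (not necessarily abelian) and $P_G\subseteq G$ a submonoid closed under conjugation; a morphism $(f,\bar f)$ is a group homomorphism $f$ with $f(P_G)\subseteq P_H$, $\bar f$ its restriction to positive cones. This is $\mathsf{PreOrdGrp}$; its regular epimorphisms are the morphisms with $f$ and $\bar f$ both surjective. A split epimorphism of monoids $g\colon X\to Y$ with section $s$ and kernel $K=g^{-1}(0)$ is homogeneous if for every $y\in Y$ the maps $K\to g^{-1}(y)$, $x\mapsto x+s(y)$ and $x\mapsto s(y)+x$, are bijections. A surjective monoid homomorphism $g\colon X\to Y$ is a special homogeneous surjection if the first projection $\pi_1\colon Eq(g)\to X$ of its kernel pair $Eq(g)=\{(x,x')\in X\times X: g(x)=g(x')\}$, with section the diagonal $x\mapsto(x,x)$, is a homogeneous split epimorphism. *)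

theory Defs
  imports Main "HOL-Library.Product_Plus"
begin

(* Monoids are represented as submonoids of an ambient additive monoid type;
   the monoid operation is the inherited + and the unit is 0. *)

definition submonoid :: "'a::monoid_add set \<Rightarrow> bool" where
  "submonoid X \<longleftrightarrow> 0 \<in> X \<and> (\<forall>a\<in>X. \<forall>b\<in>X. a + b \<in> X)"

definition monoid_hom_on :: "'a::monoid_add set \<Rightarrow> 'b::monoid_add set \<Rightarrow> ('a \<Rightarrow> 'b) \<Rightarrow> bool" where
  "monoid_hom_on X Y g \<longleftrightarrow> g ` X \<subseteq> Y \<and> g 0 = 0 \<and> (\<forall>a\<in>X. \<forall>b\<in>X. g (a + b) = g a + g b)"

definition homogeneous_split_epi ::
  "'a::monoid_add set \<Rightarrow> 'b::monoid_add set \<Rightarrow> ('a \<Rightarrow> 'b) \<Rightarrow> ('b \<Rightarrow> 'a) \<Rightarrow> bool" where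
  "homogeneous_split_epi X Y g s \<longleftrightarrow>
     submonoid X \<and> submonoid Y \<and> monoid_hom_on X Y g \<and> monoid_hom_on Y X s \<and>
     (\<forall>y\<in>Y. g (s y) = y) \<and>
     (\<forall>y\<in>Y. bij_betw (\<lambda>k. k + s y) {k\<in>X. g k = 0} {x\<in>X. g x = y} \<and>
             bij_betw (\<lambda>k. s y + k) {k\<in>X. g k = 0} {x\<in>X. g x = y})"

definition kernel_pair :: "'a::monoid_add set \<Rightarrow> ('a \<Rightarrow> 'b) \<Rightarrow> ('a \<times> 'a) set" where
  "kernel_pair X g = {(x, x'). x \<in> X \<and> x' \<in> X \<and> g x = g x'}"

definition special_homogeneous_surjection ::
  "'a::monoid_add set \<Rightarrow> 'b::monoid_add set \<Rightarrow> ('a \<Rightarrow> 'b) \<Rightarrow> bool" where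
  "special_homogeneous_surjection X Y g \<longleftrightarrow>
     submonoid X \<and> submonoid Y \<and> monoid_hom_on X Y g \<and> g ` X = Y \<and>
     homogeneous_split_epi (kernel_pair X g) X fst (\<lambda>x. (x, x))"

(* preordered group: positive cone is a submonoid closed under conjugation *)
definition preordered_group :: "'a::group_add set \<Rightarrow> bool" where
  "preordered_group P \<longleftrightarrow> submonoid P \<and> (\<forall>g. \<forall>p\<in>P. g + p - g \<in> P)"

definition group_hom :: "('a::group_add \<Rightarrow> 'b::group_add) \<Rightarrow> bool" where
  "group_hom f \<longleftrightarrow> (\<forall>a b. f (a + b) = f a + f b)"

definition preord_regular_epi :: "'a::group_add set \<Rightarrow> 'b::group_add set \<Rightarrow> ('a \<Rightarrow> 'b) \<Rightarrow> bool" where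
  "preord_regular_epi PG PH f \<longleftrightarrow>
     preordered_group PG \<and> preordered_group PH \<and> group_hom f \<and>
     f ` PG \<subseteq> PH \<and> surj f \<and> f ` PG = PH"

end

theory Submission
  imports Defs
begin

theorem lemma6p2:
  fixes f :: "'a::group_add \<Rightarrow> 'b::group_add"
    and PG :: "'a set" and PH :: "'b set"
  assumes "preord_regular_epi PG PH f"
  shows "special_homogeneous_surjection PG PH f \<longleftrightarrow>
           (\<forall>x\<in>PG. \<forall>y\<in>PG. f x = f y \<longrightarrow> y - x \<in> PG \<and> - x + y \<in> PG)"
proof -
  have sG: "submonoid PG" and sH: "submonoid PH" and hom: "\<And>a b. f (a + b) = f a + f b"
    and img: "f ` PG = PH"
  proof -
    have a: "preordered_group PG" "preordered_group PH" "group_hom f" "f ` PG = PH"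
      using assms unfolding preord_regular_epi_def by simp_all
    then show "submonoid PG" "submonoid PH" "\<And>a b. f (a + b) = f a + f b" "f ` PG = PH"
      unfolding preordered_group_def group_hom_def by simp_all
  qed
  have f0: "f 0 = 0"
  proof -
    have "f 0 + f 0 = f 0 + 0" using hom[of 0 0] by simp
    then show ?thesis by (simp only: add_left_cancel)
  qed
  have fm: "\<And>a. f (- a) = - f a"
  proof -
    fix a
    have "f a + f (- a) = 0" using hom[of a "- a"] f0 by simp
    then show "f (- a) = - f a" by (simp only: minus_unique)
  qed
  have fd: "\<And>a b. f (a - b) = f a - f b" by (simp only: diff_conv_add_uminus hom fm)
  have z: "0 \<in> PG" and cl: "\<And>a b. a \<in> PG \<Longrightarrow> b \<in> PG \<Longrightarrow> a + b \<in> PG"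
    using sG unfolding submonoid_def by blast+
  let ?K = "kernel_pair PG f"
  have mh: "monoid_hom_on PG PH f" using img f0 hom unfolding monoid_hom_on_def by blast
  have sK: "submonoid ?K"
    unfolding submonoid_def kernel_pair_def using z cl hom f0 by (auto simp: zero_prod_def)
  have m1: "monoid_hom_on ?K PG fst"
    unfolding monoid_hom_on_def kernel_pair_def by (auto simp: zero_prod_def)
  have m2: "monoid_hom_on PG ?K (\<lambda>x. (x, x))"
    unfolding monoid_hom_on_def kernel_pair_def using z by (auto simp: zero_prod_def)
  have ker: "{k\<in>?K. fst k = 0} = {(0, b) | b. b \<in> PG \<and> f b = 0}"
    unfolding kernel_pair_def using z f0 by auto
  have fib: "\<And>y. {x\<in>?K. fst x = y} = {(y, b) | b. y \<in> PG \<and> b \<in> PG \<and> f y = f b}"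
    unfolding kernel_pair_def by auto
  have eq: "special_homogeneous_surjection PG PH f \<longleftrightarrow>
     (\<forall>y\<in>PG. bij_betw (\<lambda>k. k + (y, y)) {k\<in>?K. fst k = 0} {x\<in>?K. fst x = y} \<and>
             bij_betw (\<lambda>k. (y, y) + k) {k\<in>?K. fst k = 0} {x\<in>?K. fst x = y})"
    unfolding special_homogeneous_surjection_def homogeneous_split_epi_def
    using sG sH mh img sK m1 m2 by simp
  show ?thesis
  proof
    assume "special_homogeneous_surjection PG PH f"
    then have B: "\<And>y. y \<in> PG \<Longrightarrow> bij_betw (\<lambda>k. k + (y, y)) {k\<in>?K. fst k = 0} {x\<in>?K. fst x = y} \<and>
             bij_betw (\<lambda>k. (y, y) + k) {k\<in>?K. fst k = 0} {x\<in>?K. fst x = y}"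
      using eq by blast
    show "\<forall>x\<in>PG. \<forall>y\<in>PG. f x = f y \<longrightarrow> y - x \<in> PG \<and> - x + y \<in> PG"
    proof (intro ballI impI)
      fix x y assume x: "x \<in> PG" and y: "y \<in> PG" and e: "f x = f y"
      have inf: "(x, y) \<in> {k\<in>?K. fst k = x}" unfolding fib using x y e by blast
      have s1: "(\<lambda>k. k + (x, x)) ` {k\<in>?K. fst k = 0} = {k\<in>?K. fst k = x}"
        using B[OF x] by (blast dest: bij_betw_imp_surj_on)
      have s2: "(\<lambda>k. (x, x) + k) ` {k\<in>?K. fst k = 0} = {k\<in>?K. fst k = x}"
        using B[OF x] by (blast dest: bij_betw_imp_surj_on)
      obtain k1 where k1: "k1 \<in> {k\<in>?K. fst k = 0}" "(x, y) = k1 + (x, x)"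
        using inf unfolding s1[symmetric] by blast
      obtain k2 where k2: "k2 \<in> {k\<in>?K. fst k = 0}" "(x, y) = (x, x) + k2"
        using inf unfolding s2[symmetric] by blast
      obtain b where b: "b \<in> PG" "k1 = (0, b)" using k1(1) unfolding ker by blast
      obtain c where c: "c \<in> PG" "k2 = (0, c)" using k2(1) unfolding ker by blast
      have b': "(x, y) = (0, b) + (x, x)" using k1(2) b(2) by simp
      have c': "(x, y) = (x, x) + (0, c)" using k2(2) c(2) by simp
      have "y = b + x" using b' by simp
      then have "y - x = b" by simp
      moreover have "y = x + c" using c' by simp
      then have "- x + y = c" by simp
      ultimately show "y - x \<in> PG \<and> - x + y \<in> PG" using b c by simp
    qed
  next
    assume H: "\<forall>x\<in>PG. \<forall>y\<in>PG. f x = f y \<longrightarrow> y - x \<in> PG \<and> - x + y \<in> PG"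
    show "special_homogeneous_surjection PG PH f"
      unfolding eq
    proof (intro ballI conjI)
      fix y assume y: "y \<in> PG"
      show "bij_betw (\<lambda>k. k + (y, y)) {k\<in>?K. fst k = 0} {x\<in>?K. fst x = y}"
        unfolding bij_betw_def ker fib
      proof
        show "inj_on (\<lambda>k. k + (y, y)) {(0, b) |b. b \<in> PG \<and> f b = 0}"
          by (rule inj_onI) simp
        show "(\<lambda>k. k + (y, y)) ` {(0, b) |b. b \<in> PG \<and> f b = 0} =
              {(y, b) |b. y \<in> PG \<and> b \<in> PG \<and> f y = f b}"
        proof (rule set_eqI, rule iffI)
          fix p assume "p \<in> (\<lambda>k. k + (y, y)) ` {(0, b) |b. b \<in> PG \<and> f b = 0}"
          then obtain b where "b \<in> PG" "f b = 0" "p = (y, b + y)" by (auto simp: zero_prod_def)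
          then show "p \<in> {(y, b) |b. y \<in> PG \<and> b \<in> PG \<and> f y = f b}"
            using y cl hom by auto
        next
          fix p assume "p \<in> {(y, b) |b. y \<in> PG \<and> b \<in> PG \<and> f y = f b}"
          then obtain b where b: "b \<in> PG" "f y = f b" "p = (y, b)" by auto
          have "b - y \<in> PG" using H y b by auto
          moreover have "f (b - y) = 0" using fd b by simp
          moreover have "p = (0, b - y) + (y, y)" using b by simp
          ultimately show "p \<in> (\<lambda>k. k + (y, y)) ` {(0, b) |b. b \<in> PG \<and> f b = 0}" by blast
        qed
      qed
      show "bij_betw (\<lambda>k. (y, y) + k) {k\<in>?K. fst k = 0} {x\<in>?K. fst x = y}"
        unfolding bij_betw_def ker fib
      proof
        show "inj_on (\<lambda>k. (y, y) + k) {(0, b) |b. b \<in> PG \<and> f b = 0}"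
          by (rule inj_onI) simp
        show "(\<lambda>k. (y, y) + k) ` {(0, b) |b. b \<in> PG \<and> f b = 0} =
              {(y, b) |b. y \<in> PG \<and> b \<in> PG \<and> f y = f b}"
        proof (rule set_eqI, rule iffI)
          fix p assume "p \<in> (\<lambda>k. (y, y) + k) ` {(0, b) |b. b \<in> PG \<and> f b = 0}"
          then obtain b where "b \<in> PG" "f b = 0" "p = (y, y + b)" by (auto simp: zero_prod_def)
          then show "p \<in> {(y, b) |b. y \<in> PG \<and> b \<in> PG \<and> f y = f b}"
            using y cl hom by auto
        next
          fix p assume "p \<in> {(y, b) |b. y \<in> PG \<and> b \<in> PG \<and> f y = f b}"
          then obtain b where b: "b \<in> PG" "f y = f b" "p = (y, b)" by auto
          have "- y + b \<in> PG" using H y b by auto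
          moreover have "f (- y + b) = 0" using hom fm b by simp
          moreover have "p = (y, y) + (0, - y + b)" using b by (simp add: add.assoc[symmetric])
          ultimately show "p \<in> (\<lambda>k. (y, y) + k) ` {(0, b) |b. b \<in> PG \<and> f b = 0}" by blast
        qed
      qed
    qed
  qed
qed

end
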